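(* Let $(\vec p(\cdot),q(\cdot),\vec r,s)$ be a proper $m$-admissible quadruple and $\vec w$ an $m$-tuple of weights. If $\vec w\in\mathcal{A}_{(\vec p(\cdot),q(\cdot)),(\vec r,s)}$, then $\vec w\in\mathcal{A}_{(\vec p(\cdot),q(\cdot)),(\vec r,\infty)}$ and $[\vec w]_{\mathcal{A}_{(\vec p(\cdot),q(\cdot)),(\vec r,\infty)}}\le C[\vec w]_{\mathcal{A}_{(\vec p(\cdot),q(\cdot)),(\vec r,s)}}$ with $C$ depending only on $q(\cdot)$ and $s$.
   Context: Exponents on $\mathbb{R}^n$. An $m$-admissible quadruple $(\vec p(\cdot),q(\cdot),\vec r,s)$: $\vec r\in(0,\infty)^m$, $s\in(0,\infty]$, $p_j\in\mathscr{P}_0$ (i.e. $0<(p_j)_-\le(p_j)_+<\infty$) with $r_j<(p_j)_-$, $q\in\mathscr{P}_0$ with $q_+<s$, and $\frac1p:=\sum_j\frac1{p_j}$ satisfies $\frac1p-\frac1q=\gamma$ constant $\ge0$; $\frac1r=\sum\frac1{r_j}$; proper if all $p_j,q$ are globally log-Hölder continuous. With $\nu_{\vec w}=\prod w_j$ and Luxemburg quasinorms, $[\vec w]_{\mathcal{A}_{(\vec p,q),(\vec r,s)}}=\sup_Q|Q|^{\gamma-(\frac1r-\frac1s)}\|\nu_{\vec w}\chi_Q\|_{1/(\frac1q-\frac1s)}\prod_j\|w_j^{-1}\chi_Q\|_{1/(\frac1{r_j}-\frac1{p_j})}$ over cubes ($1/\infty=0$). *)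

theory Defs
  imports "HOL-Analysis.Analysis"
begin

text \<open>Variable exponents live on R^n = real ^ 'n. Essential infimum/supremum
 of an exponent are taken pointwise (inf / sup over all points).\<close>

definition pminus :: "('a \<Rightarrow> real) \<Rightarrow> real" where
  "pminus p = Inf (range p)"

definition pplus :: "('a \<Rightarrow> real) \<Rightarrow> real" where
  "pplus p = Sup (range p)"

definition P0 :: "(real ^ 'n \<Rightarrow> real) \<Rightarrow> bool" where
  "P0 p \<longleftrightarrow> p \<in> borel_measurable lebesgue \<and> bdd_below (range p) \<and> bdd_above (range p)
      \<and> 0 < pminus p"

definition log_holder :: "(real ^ 'n \<Rightarrow> real) \<Rightarrow> bool" where
  "log_holder p \<longleftrightarrow>
     (\<exists>C0. \<forall>x y. 0 < dist x y \<and> dist x y < 1/2 \<longrightarrow> \<bar>p x - p y\<bar> \<le> C0 / (- ln (dist x y)))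
   \<and> (\<exists>Cinf pinf. \<forall>x. \<bar>p x - pinf\<bar> \<le> Cinf / ln (exp 1 + norm x))"

definition einv :: "ereal \<Rightarrow> real" where
  "einv s = (if s = \<infinity> then 0 else 1 / real_of_ereal s)"

definition admissible ::
  "nat \<Rightarrow> (nat \<Rightarrow> real ^ 'n \<Rightarrow> real) \<Rightarrow> (real ^ 'n \<Rightarrow> real) \<Rightarrow> (nat \<Rightarrow> real) \<Rightarrow> ereal \<Rightarrow> bool" where
  "admissible m p q r s \<longleftrightarrow>
     1 \<le> m \<and> 0 < s
   \<and> (\<forall>j<m. 0 < r j \<and> P0 (p j) \<and> r j < pminus (p j))
   \<and> P0 q \<and> ereal (pplus q) < s
   \<and> (\<exists>\<gamma>\<ge>0. \<forall>x. (\<Sum>j<m. 1 / p j x) - 1 / q x = \<gamma>)"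

definition proper_admissible ::
  "nat \<Rightarrow> (nat \<Rightarrow> real ^ 'n \<Rightarrow> real) \<Rightarrow> (real ^ 'n \<Rightarrow> real) \<Rightarrow> (nat \<Rightarrow> real) \<Rightarrow> ereal \<Rightarrow> bool" where
  "proper_admissible m p q r s \<longleftrightarrow>
     admissible m p q r s \<and> (\<forall>j<m. log_holder (p j)) \<and> log_holder q"

text \<open>The constant gamma = 1/p - 1/q (constant by admissibility; evaluated at 0).\<close>
definition gam :: "nat \<Rightarrow> (nat \<Rightarrow> real ^ 'n \<Rightarrow> real) \<Rightarrow> (real ^ 'n \<Rightarrow> real) \<Rightarrow> real" where
  "gam m p q = (\<Sum>j<m. 1 / p j 0) - 1 / q 0"

definition weight :: "(real ^ 'n \<Rightarrow> real) \<Rightarrow> bool" where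
  "weight w \<longleftrightarrow> w \<in> borel_measurable lebesgue \<and> (\<forall>x. 0 \<le> w x)
     \<and> (AE x in lebesgue. 0 < w x)
     \<and> (\<forall>K. compact K \<longrightarrow> set_integrable lebesgue K w)"

definition lux :: "(real ^ 'n \<Rightarrow> real) \<Rightarrow> (real ^ 'n \<Rightarrow> real) \<Rightarrow> ennreal" where
  "lux e f = Inf {ennreal t | t. 0 < t \<and>
       (\<integral>\<^sup>+ x. ennreal ((\<bar>f x\<bar> / t) powr e x) \<partial>lebesgue) \<le> 1}"

definition cubes :: "(real ^ 'n) set set" where
  "cubes = {cbox a (a + l *\<^sub>R One) | a l. 0 < l}"

definition Aconst ::
  "nat \<Rightarrow> (nat \<Rightarrow> real ^ 'n \<Rightarrow> real) \<Rightarrow> (real ^ 'n \<Rightarrow> real) \<Rightarrow> (nat \<Rightarrow> real) \<Rightarrow> ereal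
     \<Rightarrow> (nat \<Rightarrow> real ^ 'n \<Rightarrow> real) \<Rightarrow> ennreal" where
  "Aconst m p q r s w =
     (SUP Q\<in>cubes.
        ennreal (measure lebesgue Q powr (gam m p q - ((\<Sum>j<m. 1 / r j) - einv s)))
      * lux (\<lambda>x. 1 / (1 / q x - einv s)) (\<lambda>x. indicator Q x * (\<Prod>j<m. w j x))
      * (\<Prod>j<m. lux (\<lambda>x. 1 / (1 / r j - 1 / p j x)) (\<lambda>x. indicator Q x * inverse (w j x))))"

end

theory Submission
  imports Defs
begin

lemma powr_max_ineq:
  fixes a b e1 e2 s :: real
  assumes a: "0 \<le> a" and b: "0 < b" and e1: "0 < e1" and e2: "0 < e2" and s: "0 < s"
    and rel: "1/e1 = 1/e2 + 1/s"
  shows "(a*b) powr e1 \<le> a powr e2 + b powr s"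
proof (cases "a = 0")
  case True then show ?thesis by simp
next
  case False
  then have a': "0 < a" using a by simp
  define u where "u = a powr e2"
  define v where "v = b powr s"
  define \<alpha> where "\<alpha> = e1/e2"
  define \<beta> where "\<beta> = e1/s"
  have u: "0 < u" using a' by (simp add: u_def)
  have v: "0 < v" using b by (simp add: v_def)
  have sum1: "\<alpha> + \<beta> = 1"
  proof -
    have "e1 * (1/e1) = e1 * (1/e2 + 1/s)" using rel by simp
    then have "e2 * s = e1 * e2 + e1 * s" using e1 e2 s by (simp add: field_simps)
    moreover have "0 < e1 * e2 + e1 * s" using e1 e2 s by (simp add: add_pos_pos)
    ultimately show ?thesis using e1 e2 s by (simp add: \<alpha>_def \<beta>_def field_simps)
  qed
  have ab: "0 \<le> \<alpha>" "0 \<le> \<beta>" using e1 e2 s by (auto simp: \<alpha>_def \<beta>_def)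
  have "(a*b) powr e1 = a powr e1 * b powr e1" using a b by (simp add: powr_mult)
  also have "a powr e1 = u powr \<alpha>" using e2 by (simp add: u_def \<alpha>_def powr_powr)
  also have "b powr e1 = v powr \<beta>" using s by (simp add: v_def \<beta>_def powr_powr)
  finally have eq: "(a*b) powr e1 = u powr \<alpha> * v powr \<beta>" .
  define M where "M = max u v"
  have "u powr \<alpha> \<le> M powr \<alpha>" using u ab by (intro powr_mono2) (auto simp: M_def)
  moreover have "v powr \<beta> \<le> M powr \<beta>" using v ab by (intro powr_mono2) (auto simp: M_def)
  ultimately have "u powr \<alpha> * v powr \<beta> \<le> M powr \<alpha> * M powr \<beta>"
    by (intro mult_mono) auto
  also have "\<dots> = M" using sum1 u v by (simp add: powr_add[symmetric] M_def)
  also have "\<dots> \<le> u + v" using u v by (simp add: M_def)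
  finally show ?thesis using eq by (simp add: u_def v_def)
qed

lemma lux_holder:
  fixes f e1 e2 :: "real^'n \<Rightarrow> real" and Q :: "(real^'n) set" and qm s :: real
  assumes Qs: "Q \<in> sets lebesgue" and Qpos: "0 < measure lebesgue Q"
    and Qfin: "emeasure lebesgue Q = ennreal (measure lebesgue Q)"
    and fQ: "\<And>x. x \<notin> Q \<Longrightarrow> f x = 0"
    and fm: "f \<in> borel_measurable lebesgue" and e2m: "e2 \<in> borel_measurable lebesgue"
    and qm: "0 < qm" and e1qm: "\<And>x. qm \<le> e1 x" and s: "0 < s"
    and e2pos: "\<And>x. 0 < e2 x" and rel: "\<And>x. 1/e1 x = 1/e2 x + 1/s"
  shows "lux e1 f \<le> ennreal (2 powr (1/qm) * measure lebesgue Q powr (1/s)) * lux e2 f"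
proof -
  define K where "K = 2 powr (1/qm)"
  define \<mu> where "\<mu> = measure lebesgue Q powr (1/s)"
  define c where "c = K * \<mu>"
  have K1: "1 \<le> K" using qm unfolding K_def by (intro ge_one_powr_ge_zero) auto
  have \<mu>: "0 < \<mu>" using Qpos by (simp add: \<mu>_def)
  have c: "0 < c" using K1 \<mu> by (simp add: c_def)
  have Kq: "(1/K) powr qm = 1/2"
    using qm by (simp add: K_def powr_divide powr_powr)
  have \<mu>s: "(1/\<mu>) powr s = 1 / measure lebesgue Q"
    using s Qpos by (simp add: \<mu>_def powr_divide powr_powr)
  have step: "lux e1 f \<le> ennreal c * ennreal t"
    if t: "0 < t" and int: "(\<integral>\<^sup>+ x. ennreal ((\<bar>f x\<bar> / t) powr e2 x) \<partial>lebesgue) \<le> 1" for t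
  proof -
    define A where "A = (\<lambda>x. ennreal ((\<bar>f x\<bar> / t) powr e2 x))"
    define B where "B = (\<lambda>x. ennreal (1 / measure lebesgue Q) * indicator Q x)"
    have pw: "ennreal ((\<bar>f x\<bar> / (c*t)) powr e1 x) \<le> ennreal (1/2) * (A x + B x)" for x
    proof (cases "x \<in> Q")
      case False then show ?thesis using fQ[of x] by simp
    next
      case True
      have e1pos: "0 < e1 x" using qm e1qm[of x] by linarith
      have "\<bar>f x\<bar> / (c*t) = ((\<bar>f x\<bar> / t) * (1/\<mu>)) * (1/K)"
        using c t \<mu> K1 by (simp add: c_def field_simps)
      then have "(\<bar>f x\<bar> / (c*t)) powr e1 x = ((\<bar>f x\<bar> / t) * (1/\<mu>)) powr e1 x * (1/K) powr e1 x"
        using t \<mu> K1 by (simp only: powr_mult[symmetric] divide_nonneg_nonneg mult_nonneg_nonneg abs_ge_zero)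
      also have "(1/K) powr e1 x \<le> (1/K) powr qm"
        using K1 e1qm[of x] qm by (intro powr_mono') auto
      then have "((\<bar>f x\<bar> / t) * (1/\<mu>)) powr e1 x * (1/K) powr e1 x
          \<le> ((\<bar>f x\<bar> / t) * (1/\<mu>)) powr e1 x * (1/2)"
        using Kq by (intro mult_left_mono) auto
      also have "((\<bar>f x\<bar> / t) * (1/\<mu>)) powr e1 x \<le> (\<bar>f x\<bar> / t) powr e2 x + (1/\<mu>) powr s"
        using t \<mu> e1pos e2pos[of x] s rel[of x] by (intro powr_max_ineq) auto
      finally have "(\<bar>f x\<bar> / (c*t)) powr e1 x \<le> 1/2 * ((\<bar>f x\<bar> / t) powr e2 x + 1 / measure lebesgue Q)"
        using \<mu>s by simp
      then have "ennreal ((\<bar>f x\<bar> / (c*t)) powr e1 x) \<le> ennreal (1/2 * ((\<bar>f x\<bar> / t) powr e2 x + 1 / measure lebesgue Q))"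
        by (rule ennreal_leI)
      also have "\<dots> = ennreal (1/2) * (ennreal ((\<bar>f x\<bar> / t) powr e2 x) + ennreal (1 / measure lebesgue Q))"
        using Qpos by (subst ennreal_mult) (auto intro: ennreal_plus)
      finally show ?thesis using True by (simp add: A_def B_def)
    qed
    note fm[measurable] e2m[measurable] Qs[measurable]
    have Am: "A \<in> borel_measurable lebesgue" unfolding A_def by measurable
    have Bm: "B \<in> borel_measurable lebesgue" unfolding B_def by measurable
    have "(\<integral>\<^sup>+ x. ennreal ((\<bar>f x\<bar> / (c*t)) powr e1 x) \<partial>lebesgue)
        \<le> (\<integral>\<^sup>+ x. ennreal (1/2) * (A x + B x) \<partial>lebesgue)"
      by (intro nn_integral_mono pw)
    also have "\<dots> = ennreal (1/2) * ((\<integral>\<^sup>+ x. A x \<partial>lebesgue) + (\<integral>\<^sup>+ x. B x \<partial>lebesgue))"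
      using Am Bm by (simp add: nn_integral_cmult nn_integral_add)
    also have "(\<integral>\<^sup>+ x. B x \<partial>lebesgue) = 1"
      unfolding B_def using Qs Qfin Qpos
      by (simp add: nn_integral_cmult_indicator ennreal_mult'[symmetric])
    also have "(\<integral>\<^sup>+ x. A x \<partial>lebesgue) \<le> 1" using int by (simp add: A_def)
    then have "ennreal (1/2) * ((\<integral>\<^sup>+ x. A x \<partial>lebesgue) + 1) \<le> ennreal (1/2) * (1 + 1)"
      by (intro mult_left_mono add_right_mono) auto
    also have "ennreal (1/2) * (1 + 1) = ennreal (1/2) * ennreal 2" by simp
    also have "\<dots> = ennreal (1/2 * 2)" by (rule ennreal_mult[symmetric]) auto
    also have "\<dots> = 1" by simp
    finally have "(\<integral>\<^sup>+ x. ennreal ((\<bar>f x\<bar> / (c*t)) powr e1 x) \<partial>lebesgue) \<le> 1" .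
    then have "ennreal (c*t) \<in> {ennreal t | t. 0 < t \<and>
       (\<integral>\<^sup>+ x. ennreal ((\<bar>f x\<bar> / t) powr e1 x) \<partial>lebesgue) \<le> 1}"
      using c t by auto
    then have "lux e1 f \<le> ennreal (c*t)" unfolding lux_def by (rule Inf_lower)
    then show ?thesis using c t by (simp add: ennreal_mult)
  qed
  have "lux e1 f / ennreal c \<le> lux e2 f"
    unfolding lux_def[of e2]
  proof (rule Inf_greatest)
    fix y assume "y \<in> {ennreal t | t. 0 < t \<and>
       (\<integral>\<^sup>+ x. ennreal ((\<bar>f x\<bar> / t) powr e2 x) \<partial>lebesgue) \<le> 1}"
    then obtain t where "y = ennreal t" "0 < t"
      "(\<integral>\<^sup>+ x. ennreal ((\<bar>f x\<bar> / t) powr e2 x) \<partial>lebesgue) \<le> 1" by auto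
    then show "lux e1 f / ennreal c \<le> y"
      using step c by (intro divide_le_posI_ennreal) auto
  qed
  then have "lux e1 f / ennreal c * ennreal c \<le> lux e2 f * ennreal c"
    by (rule mult_right_mono) simp
  moreover have "lux e1 f / ennreal c * ennreal c = lux e1 f"
    using c by (simp add: ennreal_divide_times ennreal_times_divide mult_divide_eq_ennreal)
  ultimately show ?thesis by (simp add: c_def K_def \<mu>_def mult.commute)
qed

lemma One_Basis: "i \<in> Basis \<Longrightarrow> One \<bullet> (i::'a::euclidean_space) = 1"
    by (simp add: inner_sum_left sum.If_cases inner_Basis)
lemma cube_pos: "0 < l \<Longrightarrow> 0 < measure lebesgue (cbox (a::real^'n) (a + l *\<^sub>R One))"
proof -
  assume l: "0 < l"
  have "emeasure lebesgue (cbox a (a + l *\<^sub>R One)) = emeasure lborel (cbox a (a + l *\<^sub>R One))"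
    by (simp add: emeasure_completion)
  also have "\<dots> = ennreal (\<Prod>b\<in>(Basis::(real^'n) set). l)"
  proof -
    have P: "\<forall>b\<in>(Basis::(real^'n) set). a \<bullet> b \<le> (a + l *\<^sub>R One) \<bullet> b"
      using l by (simp add: inner_left_distrib One_Basis)
    have X: "(\<Prod>b\<in>(Basis::(real^'n) set). (a + l *\<^sub>R One - a) \<bullet> b) = (\<Prod>b\<in>(Basis::(real^'n) set). l)"
      by (rule prod.cong) (simp_all add: One_Basis)
    show ?thesis unfolding emeasure_lborel_cbox_eq if_P[OF P] X ..
  qed
  finally have "emeasure lebesgue (cbox a (a + l *\<^sub>R One)) = ennreal (l ^ card (Basis::(real^'n) set))" by simp
  then have "ennreal (measure lebesgue (cbox a (a + l *\<^sub>R One))) = ennreal (l ^ card (Basis::(real^'n) set))"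
    by (simp add: emeasure_eq_measure2[OF lmeasurable_cbox])
  then have "measure lebesgue (cbox a (a + l *\<^sub>R One)) = l ^ card (Basis::(real^'n) set)"
    using l by (simp add: ennreal_inj)
  then show ?thesis using l by simp
qed

theorem mainTheorem9:
  fixes q :: "real ^ 'n \<Rightarrow> real" and s :: ereal
  shows "\<exists>C>0. \<forall>(m::nat) (p::nat \<Rightarrow> real ^ 'n \<Rightarrow> real) (r::nat \<Rightarrow> real) (w::nat \<Rightarrow> real ^ 'n \<Rightarrow> real).
           proper_admissible m p q r s \<and> (\<forall>j<m. weight (w j)) \<and> Aconst m p q r s w < \<infinity>
           \<longrightarrow> Aconst m p q r \<infinity> w < \<infinity> \<and> Aconst m p q r \<infinity> w \<le> ennreal C * Aconst m p q r s w"
proof (intro exI[of _ "2 powr (1 / pminus q)"] conjI allI impI)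
  show "0 < 2 powr (1 / pminus q)" by simp
  fix m p r w
  assume H: "proper_admissible m p q r s \<and> (\<forall>j<m. weight (w j)) \<and> Aconst m p q r s w < \<infinity>"
  define qm where "qm = pminus q"
  define K where "K = 2 powr (1 / pminus q)"
  have adm: "admissible m p q r s" using H by (simp add: proper_admissible_def)
  have s0: "0 < s" and P0q: "P0 q" and qs: "ereal (pplus q) < s"
    using adm by (auto simp: admissible_def)
  have qm: "0 < qm" using P0q by (simp add: P0_def qm_def)
  have qmeas: "q \<in> borel_measurable lebesgue" using P0q by (simp add: P0_def)
  have qlow: "qm \<le> q x" for x
    using P0q unfolding P0_def qm_def pminus_def by (auto intro: cInf_lower)
  have qup: "q x \<le> pplus q" for x
    using P0q unfolding P0_def pplus_def by (auto intro: cSup_upper)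
  have K1: "1 \<le> K" using qm unfolding K_def qm_def by (intro ge_one_powr_ge_zero) auto
  have fin: "Aconst m p q r s w < \<infinity>" using H by simp
  have main: "Aconst m p q r \<infinity> w \<le> ennreal K * Aconst m p q r s w"
  proof (cases "s = \<infinity>")
    case True
    have "Aconst m p q r s w = 1 * Aconst m p q r s w" by simp
    also have "\<dots> \<le> ennreal K * Aconst m p q r s w"
      using K1 by (intro mult_right_mono) auto
    finally show ?thesis using True by simp
  next
    case False
    then obtain sr where sr: "s = ereal sr" using s0 by (cases s) auto
    have sq: "pplus q < sr" using qs sr by simp
    have sr0: "0 < sr" using qm qlow[of 0] qup[of 0] sq by linarith
    have einvs: "einv s = 1 / sr" using sr by (simp add: einv_def)
    have einvi: "einv \<infinity> = 0" by (simp add: einv_def)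
    define e1 where "e1 = (\<lambda>x. 1 / (1 / q x - einv \<infinity>))"
    define e2 where "e2 = (\<lambda>x. 1 / (1 / q x - einv s))"
    have qpos: "0 < q x" for x using qm qlow[of x] by linarith
    have e1q: "e1 x = q x" for x by (simp add: e1_def einvi)
    have e1qm: "qm \<le> e1 x" for x unfolding e1q by (rule qlow)
    have e2pos: "0 < e2 x" for x
    proof -
      have "q x < sr" using qup[of x] sq by linarith
      then have "1 / sr < 1 / q x" using qpos[of x] by (simp add: frac_less2)
      then show ?thesis by (simp add: e2_def einvs)
    qed
    have rel: "1 / e1 x = 1 / e2 x + 1 / sr" for x
      by (simp add: e1_def e2_def einvi einvs)
    have e2m: "e2 \<in> borel_measurable lebesgue"
      unfolding e2_def using qmeas by measurable
    have wm: "\<And>j. j < m \<Longrightarrow> w j \<in> borel_measurable lebesgue"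
      using H by (simp add: weight_def)
    define T where "T = (\<lambda>t Q. ennreal (measure lebesgue Q powr (gam m p q - ((\<Sum>j<m. 1 / r j) - einv t)))
      * lux (\<lambda>x. 1 / (1 / q x - einv t)) (\<lambda>x. indicator Q x * (\<Prod>j<m. w j x))
      * (\<Prod>j<m. lux (\<lambda>x. 1 / (1 / r j - 1 / p j x)) (\<lambda>x. indicator Q x * inverse (w j x))))"
    have AT: "Aconst m p q r t w = (SUP Q\<in>cubes. T t Q)" for t
      by (simp add: Aconst_def T_def)
    have cubeT: "T \<infinity> Q \<le> ennreal K * T s Q" if Q: "Q \<in> cubes" for Q
    proof -
      obtain a l where Qd: "Q = cbox a (a + l *\<^sub>R One)" and l: "0 < l"
        using Q by (auto simp: cubes_def)
      have Qs: "Q \<in> sets lebesgue" using Qd by simp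
      have Qpos: "0 < measure lebesgue Q" unfolding Qd using l by (rule cube_pos)
      have Qfin: "emeasure lebesgue Q = ennreal (measure lebesgue Q)"
        using Qd by (simp add: emeasure_eq_measure2)
      define f where "f = (\<lambda>x. indicator Q x * (\<Prod>j<m. w j x))"
      have fm: "f \<in> borel_measurable lebesgue"
        unfolding f_def using Qs wm
        by (intro borel_measurable_times borel_measurable_indicator borel_measurable_prod) auto
      have fQ: "\<And>x. x \<notin> Q \<Longrightarrow> f x = 0" by (simp add: f_def)
      have LH: "lux e1 f \<le> ennreal (2 powr (1/qm) * measure lebesgue Q powr (1/sr)) * lux e2 f"
        by (rule lux_holder[OF Qs Qpos Qfin fQ fm e2m qm e1qm sr0 e2pos rel])
      define P where "P = (\<Prod>j<m. lux (\<lambda>x. 1 / (1 / r j - 1 / p j x)) (\<lambda>x. indicator Q x * inverse (w j x)))"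
      define g where "g = gam m p q - (\<Sum>j<m. 1 / r j)"
      have "T \<infinity> Q = ennreal (measure lebesgue Q powr g) * lux e1 f * P"
        by (simp add: T_def e1_def f_def P_def g_def einvi)
      also have "\<dots> \<le> ennreal (measure lebesgue Q powr g) * (ennreal (2 powr (1/qm) * measure lebesgue Q powr (1/sr)) * lux e2 f) * P"
        by (intro mult_right_mono mult_left_mono LH) auto
      also have "\<dots> = ennreal (measure lebesgue Q powr g * (K * measure lebesgue Q powr (1/sr))) * lux e2 f * P"
        by (simp add: ennreal_mult K_def qm_def mult.assoc)
      also have "measure lebesgue Q powr g * (K * measure lebesgue Q powr (1/sr))
          = K * measure lebesgue Q powr (gam m p q - ((\<Sum>j<m. 1 / r j) - einv s))"
        by (simp add: g_def einvs powr_add[symmetric] algebra_simps)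
      also have "ennreal (K * measure lebesgue Q powr (gam m p q - ((\<Sum>j<m. 1 / r j) - einv s))) * lux e2 f * P
          = ennreal K * T s Q"
        using K1 by (simp add: T_def e2_def f_def P_def ennreal_mult mult.assoc)
      finally show ?thesis .
    qed
    show ?thesis unfolding AT
    proof (rule SUP_least)
      fix Q :: "(real^'n) set" assume Q: "Q \<in> cubes"
      have "T \<infinity> Q \<le> ennreal K * T s Q" by (rule cubeT[OF Q])
      also have "\<dots> \<le> ennreal K * (SUP Q\<in>cubes. T s Q)"
        by (intro mult_left_mono SUP_upper Q) auto
      finally show "T \<infinity> Q \<le> ennreal K * (SUP Q\<in>cubes. T s Q)" .
    qed
  qed
  then show "Aconst m p q r \<infinity> w \<le> ennreal (2 powr (1 / pminus q)) * Aconst m p q r s w"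
    by (simp add: K_def)
  have "ennreal K * Aconst m p q r s w < \<infinity>"
    using fin by (simp add: ennreal_mult_less_top)
  then show "Aconst m p q r \<infinity> w < \<infinity>" using main by (rule le_less_trans[rotated])
qed

end
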